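(* Let $T$ be an MFQST with degree bound $\phi\ge3$. Then every source $z$ of $T$ has degree at most $\phi-1$. Moreover, suppose $z$ has degree exactly $\phi-1$, with in-neighbours $u_1,\dots,u_r$ and out-neighbour $y$. Let $$C=\frac{z+\sum_{i} f(u_iz)\,u_i}{1+\sum_i f(u_iz)}$$ be the centre of mass of $z$ (with mass $1$, its supply) and its in-neighbours (each weighted by the flow on its edge to $z$). Then $z=(C+y)/2$.
   Context: Let $Z=\{z_1,\dots,z_n\}\subset\mathbb{R}^2$ ($n\ge 1$) be a set of sources and $z_{BS}\in\mathbb{R}^2\setminus Z$ a sink; each source has supply $1$. A flow-dependent quadratic Steiner tree (FQST) consists of a finite set $S\subset\mathbb{R}^2$ of Steiner points and a tree $T$ with vertex set $Z\cup S\cup\{z_{BS}\}$ whose edges are directed towards $z_{BS}$. Every node other than the sink has exactly one out-edge, and the sink has none. Each edge $e$ carries a positive flow $f(e)$ such that: - at each source, the flow on its out-edge minus the total flow on its in-edges equals $1$; - at each Steiner point, the out-flow equals the total in-flow; - the sink receives total flow $n$. The cost is $L(T)=\sum_{e\in E(T)} f(e)|e|^2$. An MFQST with degree bound $\phi$ is an FQST minimising $L$ among all FQSTs (any finite $S$, any topology) in which every Steiner point has degree at least $\phi$. In-neighbours of a node are the tails of its in-edges; its out-neighbour is the head of its out-edge. *)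

theory Defs
  imports "HOL-Analysis.Analysis"
begin

type_synonym pt = "real^2"

text \<open>An FQST is encoded by its finite Steiner point set S, the head map p
 (the out-neighbour p x of every non-sink node x, i.e. the edge x -> p x) and
 the flow map f (f x is the flow on the out-edge of x). The vertex set is
 Z \<union> S \<union> {zbs}; values of p, f outside the non-sink vertices are irrelevant.\<close>

definition fq_vertices :: "pt set \<Rightarrow> pt \<Rightarrow> pt set \<Rightarrow> pt set" where
  "fq_vertices Z zbs S = Z \<union> S \<union> {zbs}"

definition in_nbrs :: "pt set \<Rightarrow> pt \<Rightarrow> pt set \<Rightarrow> (pt \<Rightarrow> pt) \<Rightarrow> pt \<Rightarrow> pt set" where
  "in_nbrs Z zbs S p v = {w \<in> fq_vertices Z zbs S - {zbs}. p w = v}"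

definition in_flow :: "pt set \<Rightarrow> pt \<Rightarrow> pt set \<Rightarrow> (pt \<Rightarrow> pt) \<Rightarrow> (pt \<Rightarrow> real) \<Rightarrow> pt \<Rightarrow> real" where
  "in_flow Z zbs S p f v = (\<Sum>w\<in>in_nbrs Z zbs S p v. f w)"

definition fq_degree :: "pt set \<Rightarrow> pt \<Rightarrow> pt set \<Rightarrow> (pt \<Rightarrow> pt) \<Rightarrow> pt \<Rightarrow> nat" where
  "fq_degree Z zbs S p v = card (in_nbrs Z zbs S p v) + (if v = zbs then 0 else 1)"

definition is_fqst :: "pt set \<Rightarrow> pt \<Rightarrow> pt set \<Rightarrow> (pt \<Rightarrow> pt) \<Rightarrow> (pt \<Rightarrow> real) \<Rightarrow> bool" where
  "is_fqst Z zbs S p f \<longleftrightarrow>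
     finite S \<and> S \<inter> (Z \<union> {zbs}) = {} \<and>
     (\<forall>x \<in> fq_vertices Z zbs S - {zbs}.
        p x \<in> fq_vertices Z zbs S \<and> (\<exists>k. (p ^^ k) x = zbs) \<and> f x > 0) \<and>
     (\<forall>z \<in> Z. f z - in_flow Z zbs S p f z = 1) \<and>
     (\<forall>s \<in> S. f s = in_flow Z zbs S p f s) \<and>
     in_flow Z zbs S p f zbs = real (card Z)"

definition fq_cost :: "pt set \<Rightarrow> pt \<Rightarrow> pt set \<Rightarrow> (pt \<Rightarrow> pt) \<Rightarrow> (pt \<Rightarrow> real) \<Rightarrow> real" where
  "fq_cost Z zbs S p f = (\<Sum>x \<in> fq_vertices Z zbs S - {zbs}. f x * (norm (x - p x))^2)"

definition deg_bounded :: "nat \<Rightarrow> pt set \<Rightarrow> pt \<Rightarrow> pt set \<Rightarrow> (pt \<Rightarrow> pt) \<Rightarrow> bool" where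
  "deg_bounded \<phi> Z zbs S p \<longleftrightarrow> (\<forall>s \<in> S. fq_degree Z zbs S p s \<ge> \<phi>)"

definition is_mfqst :: "nat \<Rightarrow> pt set \<Rightarrow> pt \<Rightarrow> pt set \<Rightarrow> (pt \<Rightarrow> pt) \<Rightarrow> (pt \<Rightarrow> real) \<Rightarrow> bool" where
  "is_mfqst \<phi> Z zbs S p f \<longleftrightarrow>
     is_fqst Z zbs S p f \<and> deg_bounded \<phi> Z zbs S p \<and>
     (\<forall>S' p' f'. is_fqst Z zbs S' p' f' \<and> deg_bounded \<phi> Z zbs S' p' \<longrightarrow>
        fq_cost Z zbs S p f \<le> fq_cost Z zbs S' p' f')"

end

theory Submission
  imports Defs
begin

lemma sq_shift:
  fixes a x z :: "'a::real_inner"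
  shows "(norm (a - x))^2 = (norm (a - z))^2 - 2 * inner (a - z) (x - z) + (norm (x - z))^2"
proof -
  have "a - x = (a - z) - (x - z)" by simp
  hence "(norm (a - x))^2 = inner ((a - z) - (x - z)) ((a - z) - (x - z))"
    by (simp add: power2_norm_eq_inner)
  also have "\<dots> = (norm (a - z))^2 - 2 * inner (a - z) (x - z) + (norm (x - z))^2"
    by (simp add: power2_norm_eq_inner inner_diff_left inner_diff_right inner_commute algebra_simps)
  finally show ?thesis .
qed

lemma geo:
  fixes z y :: "'a::real_inner" and V :: "'a set"
  assumes finV: "finite V" and F: "F > 0" and c: "c \<ge> 0" and finM: "finite M"
    and fM: "\<forall>w\<in>M. f w \<ge> 0"
    and D: "\<forall>x. x \<notin> V \<longrightarrow> 0 \<le> F*(norm(x-y))^2 + c*(norm(z-x))^2 + (\<Sum>w\<in>M. f w*(norm(w-x))^2)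
               - F*(norm(z-y))^2 - (\<Sum>w\<in>M. f w*(norm(w-z))^2)"
  shows "(\<Sum>w\<in>M. f w *\<^sub>R (w - z)) + F *\<^sub>R (y - z) = 0"
proof (rule ccontr)
  define h where "h = (\<Sum>w\<in>M. f w *\<^sub>R (w - z)) + F *\<^sub>R (y - z)"
  define K where "K = (\<Sum>w\<in>M. f w) + c + F"
  assume hne: "\<not> ?thesis"
  hence hne: "h \<noteq> 0" by (simp add: h_def)
  have Kpos: "K > 0" using F c fM by (simp add: K_def sum_nonneg add_nonneg_pos)
  have Dx: "F*(norm(x-y))^2 + c*(norm(z-x))^2 + (\<Sum>w\<in>M. f w*(norm(w-x))^2)
               - F*(norm(z-y))^2 - (\<Sum>w\<in>M. f w*(norm(w-z))^2)
          = K*(norm(x-z))^2 - 2*inner h (x - z)" for x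
  proof -
    have s1: "(\<Sum>w\<in>M. f w*(norm(w-x))^2) = (\<Sum>w\<in>M. f w*(norm(w-z))^2)
          - 2 * (\<Sum>w\<in>M. f w * inner (w - z) (x - z)) + (\<Sum>w\<in>M. f w) * (norm (x - z))^2"
      by (simp add: sq_shift[of _ x z] algebra_simps sum.distrib sum_subtractf sum_distrib_left sum_distrib_right)
    have s2: "(norm(x-y))^2 = (norm(y-z))^2 - 2 * inner (y - z) (x - z) + (norm (x - z))^2"
      by (metis norm_minus_commute sq_shift)
    have s3: "(norm(z-x))^2 = (norm(x-z))^2" by (simp add: norm_minus_commute)
    have s4: "(norm(z-y))^2 = (norm(y-z))^2" by (simp add: norm_minus_commute)
    have s5: "inner h (x - z) = (\<Sum>w\<in>M. f w * inner (w - z) (x - z)) + F * inner (y - z) (x - z)"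
      by (simp add: h_def inner_add_left inner_sum_left)
    show ?thesis unfolding s1 s2 s3 s4 s5 K_def by (simp add: algebra_simps)
  qed
  define T where "T = (\<lambda>t. z + t *\<^sub>R h) ` {0<..<2/K}"
  have "inj_on (\<lambda>t. z + t *\<^sub>R h) {0<..<2/K}"
    using hne by (auto simp: inj_on_def)
  moreover have "infinite {0<..<2/K}" using Kpos by simp
  ultimately have "infinite T" unfolding T_def using finite_imageD by blast
  then obtain x where "x \<in> T" "x \<notin> V" using finV
    by (meson finite_subset subsetI)
  then obtain t where t: "0 < t" "t < 2/K" and x: "x = z + t *\<^sub>R h" by (auto simp: T_def)
  have "K*(norm(x-z))^2 - 2*inner h (x - z) = t * (norm h)^2 * (K*t - 2)"
    using t(1) by (simp add: x inner_commute algebra_simps power2_eq_square flip: power2_norm_eq_inner)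
  moreover have "K*t - 2 < 0" using t Kpos by (simp add: field_simps)
  moreover have "t * (norm h)^2 > 0" using t hne by simp
  ultimately have "K*(norm(x-z))^2 - 2*inner h (x - z) < 0"
    by (simp add: mult_pos_neg)
  with D \<open>x \<notin> V\<close> Dx show False by fastforce
qed


lemma fix_reach:
  assumes "p z = z" shows "(p ^^ k) z = z"
  using assms by (induction k) auto

lemma cycle_reach:
  assumes "p y = z" "p z = y" shows "(p ^^ k) z \<in> {z, y}"
  using assms by (induction k) auto

lemma reach_new:
  assumes pV: "\<forall>w\<in>V-{zbs}. p w \<in> V" and xV: "x \<notin> V" and zV: "z \<in> V" and zz: "z \<noteq> zbs"
    and pM: "\<forall>w\<in>M. p w = z"
    and p'x: "p' x = p z" and p'z: "p' z = x" and p'M: "\<forall>w\<in>M. p' w = x"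
    and p'o: "\<forall>w. w \<noteq> x \<and> w \<noteq> z \<and> w \<notin> M \<longrightarrow> p' w = p w"
  shows "w \<in> V \<Longrightarrow> (p^^k) w = zbs \<Longrightarrow> \<exists>k'. (p'^^k') w = zbs"
proof (induction k arbitrary: w)
  case 0
  then show ?case by (metis funpow_0)
next
  case (Suc k)
  show ?case
  proof (cases "w = zbs")
    case True then show ?thesis by (metis funpow_0)
  next
    case wz: False
    have pw: "p w \<in> V" using pV Suc.prems wz by blast
    have rk: "(p^^k) (p w) = zbs" using Suc.prems(2) by (simp add: funpow_Suc_right del: funpow.simps)
    show ?thesis
    proof (cases "w = z")
      case True
      obtain k'' where k'': "(p'^^k'') (p z) = zbs" using Suc.IH[OF pw rk] True by blast
      have "(p'^^Suc (Suc k'')) z = zbs"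
        using k'' p'x p'z by (simp add: funpow_Suc_right del: funpow.simps)
      then show ?thesis using True by blast
    next
      case wnz: False
      show ?thesis
      proof (cases "w \<in> M")
        case True
        hence "p w = z" using pM by blast
        then obtain k'' where k'': "(p'^^k'') z = zbs" using Suc.IH[OF zV] rk by metis
        have "k'' \<noteq> 0" using k'' zz by (metis funpow_0)
        then obtain j where j: "k'' = Suc j" using not0_implies_Suc by blast
        have "(p'^^j) x = zbs" using k'' j p'z by (simp add: funpow_Suc_right del: funpow.simps)
        hence "(p'^^Suc j) w = zbs" using p'M True by (simp add: funpow_Suc_right del: funpow.simps)
        then show ?thesis by blast
      next
        case False
        have wx: "w \<noteq> x" using Suc.prems xV by blast
        obtain k'' where k'': "(p'^^k'') (p w) = zbs" using Suc.IH[OF pw rk] by blast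
        have "(p'^^Suc k'') w = zbs" using k'' p'o wx wnz False
          by (simp add: funpow_Suc_right del: funpow.simps)
        then show ?thesis by blast
      qed
    qed
  qed
qed


lemma construct:
  assumes finZ: "finite Z" and zbsZ: "zbs \<notin> Z" and mf: "is_mfqst \<phi> Z zbs S p f" and z: "z \<in> Z"
    and M: "M \<subseteq> in_nbrs Z zbs S p z" and card: "\<phi> \<le> card M + 2"
    and xV: "x \<notin> fq_vertices Z zbs S"
  shows "0 \<le> f z*(norm(x - p z))^2 + (1 + (\<Sum>w\<in>in_nbrs Z zbs S p z - M. f w))*(norm(z-x))^2
     + (\<Sum>w\<in>M. f w*(norm(w-x))^2) - f z*(norm(z - p z))^2 - (\<Sum>w\<in>M. f w*(norm(w-z))^2)"
proof -
  define V where "V = fq_vertices Z zbs S"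
  define U where "U = in_nbrs Z zbs S p z"
  define y where "y = p z"
  define F where "F = f z"
  define c where "c = 1 + (\<Sum>w\<in>U - M. f w)"
  have fq: "is_fqst Z zbs S p f" and db: "deg_bounded \<phi> Z zbs S p"
    and mini: "\<And>S' p' f'. is_fqst Z zbs S' p' f' \<Longrightarrow> deg_bounded \<phi> Z zbs S' p' \<Longrightarrow>
        fq_cost Z zbs S p f \<le> fq_cost Z zbs S' p' f'"
    using mf unfolding is_mfqst_def by blast+
  have finS: "finite S" and disj: "S \<inter> (Z \<union> {zbs}) = {}"
    and Vp: "\<forall>w\<in>V-{zbs}. p w \<in> V \<and> (\<exists>k. (p ^^ k) w = zbs) \<and> f w > 0"
    and flZ: "\<forall>s\<in>Z. f s - in_flow Z zbs S p f s = 1"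
    and flS: "\<forall>s\<in>S. f s = in_flow Z zbs S p f s"
    and flB: "in_flow Z zbs S p f zbs = real (card Z)"
    using fq unfolding is_fqst_def V_def by blast+
  have finV: "finite V" using finZ finS by (simp add: V_def fq_vertices_def)
  have zbsV: "zbs \<in> V" and zV: "z \<in> V" using z by (auto simp: V_def fq_vertices_def)
  have zz: "z \<noteq> zbs" using z zbsZ by blast
  have yV: "y \<in> V" using Vp zV zz by (simp add: y_def)
  have Fpos: "F > 0" using Vp zV zz by (simp add: F_def)
  have yz: "y \<noteq> z"
  proof
    assume "y = z"
    then obtain k where "(p^^k) z = zbs" using Vp zV zz by blast
    with fix_reach[of p z k] \<open>y = z\<close> zz show False by (simp add: y_def)
  qed
  have Ueq: "U = {w \<in> V - {zbs}. p w = z}" by (simp add: U_def in_nbrs_def V_def)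
  have finU: "finite U" using finV Ueq by simp
  have MU: "M \<subseteq> U" using M by (simp add: U_def)
  have finM: "finite M" using finU MU finite_subset by blast
  have pM: "\<forall>w\<in>M. p w = z" using MU Ueq by blast
  have MV: "M \<subseteq> V - {zbs}" using MU Ueq by blast
  have zM: "z \<notin> M" using pM yz by (auto simp: y_def)
  have yM: "y \<notin> M"
  proof
    assume yM: "y \<in> M"
    have pyz: "p y = z" using pM yM by blast
    have yb: "y \<noteq> zbs" using MV yM by blast
    obtain k where k: "(p^^k) z = zbs" using Vp zV zz by blast
    have "(p^^k) z \<in> {z, y}" using cycle_reach[OF pyz y_def[symmetric]] by blast
    with k yb zz show False by simp
  qed
  have xzbs: "x \<noteq> zbs" and xZ: "x \<notin> Z" and xS: "x \<notin> S" and xz: "x \<noteq> z" and xy: "x \<noteq> y"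
    and xM: "x \<notin> M" and xU: "x \<notin> U"
    using xV zV yV MV Ueq by (auto simp: V_def fq_vertices_def)
  define S' where "S' = insert x S"
  define p' where "p' = (\<lambda>w. if w = x then y else if w = z \<or> w \<in> M then x else p w)"
  define f' where "f' = (\<lambda>w. if w = x then F else if w = z then c else f w)"
  have p'x: "p' x = y" and p'z: "p' z = x" and p'M: "\<forall>w\<in>M. p' w = x"
    and p'o: "\<forall>w. w \<noteq> x \<and> w \<noteq> z \<and> w \<notin> M \<longrightarrow> p' w = p w"
    using xz xM by (auto simp: p'_def)
  have f'x: "f' x = F" and f'z: "f' z = c" and f'o: "\<And>w. w \<noteq> x \<Longrightarrow> w \<noteq> z \<Longrightarrow> f' w = f w"
    using xz by (auto simp: f'_def)
  have V': "fq_vertices Z zbs S' = insert x V" by (auto simp: V_def S'_def fq_vertices_def)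
  have pV: "\<forall>w\<in>V-{zbs}. p w \<in> V" using Vp by blast
  have reach: "\<And>w k. w \<in> V \<Longrightarrow> (p^^k) w = zbs \<Longrightarrow> \<exists>k'. (p'^^k') w = zbs"
    using reach_new[OF pV xV[folded V_def] zV zz pM p'x[unfolded y_def] p'z p'M p'o] by blast
  have xVV: "x \<notin> V" using xV by (simp add: V_def)
  have pzy: "p z = y" by (simp add: y_def)
  have in_x: "in_nbrs Z zbs S' p' x = insert z M"
  proof (rule set_eqI)
    fix w show "w \<in> in_nbrs Z zbs S' p' x \<longleftrightarrow> w \<in> insert z M"
      unfolding in_nbrs_def V' using MV zV zz xz xM xzbs xy pV xVV by (auto simp: p'_def)
  qed
  have in_z: "in_nbrs Z zbs S' p' z = U - M"
  proof (rule set_eqI)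
    fix w show "w \<in> in_nbrs Z zbs S' p' z \<longleftrightarrow> w \<in> U - M"
      unfolding in_nbrs_def V' Ueq using xz xM xzbs yz xVV pzy by (auto simp: p'_def)
  qed
  have in_o: "in_nbrs Z zbs S' p' v = in_nbrs Z zbs S p v" if "v \<noteq> x" "v \<noteq> z" "v \<noteq> y" for v
  proof (rule set_eqI)
    fix w show "w \<in> in_nbrs Z zbs S' p' v \<longleftrightarrow> w \<in> in_nbrs Z zbs S p v"
      unfolding in_nbrs_def V' V_def[symmetric] using that pM pzy xVV by (auto simp: p'_def)
  qed
  have in_y: "in_nbrs Z zbs S' p' y = insert x (in_nbrs Z zbs S p y - {z})"
  proof (rule set_eqI)
    fix w show "w \<in> in_nbrs Z zbs S' p' y \<longleftrightarrow> w \<in> insert x (in_nbrs Z zbs S p y - {z})"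
      unfolding in_nbrs_def V' V_def[symmetric] using pM pzy xVV xzbs xz xy yz by (auto simp: p'_def)
  qed
  have fin_in: "finite (in_nbrs Z zbs S p v)" for v
    using finV by (simp add: in_nbrs_def V_def)
  have zy_in: "z \<in> in_nbrs Z zbs S p y" using zV zz by (simp add: in_nbrs_def V_def y_def)
  have x_nin: "x \<notin> in_nbrs Z zbs S p v" for v using xV by (simp add: in_nbrs_def)
  have in_sub: "in_nbrs Z zbs S p v \<subseteq> V" for v by (auto simp: in_nbrs_def V_def)
  have fl_x: "in_flow Z zbs S' p' f' x = c + (\<Sum>w\<in>M. f w)"
  proof -
    have "in_flow Z zbs S' p' f' x = f' z + (\<Sum>w\<in>M. f' w)"
      by (simp add: in_flow_def in_x finM zM)
    also have "(\<Sum>w\<in>M. f' w) = (\<Sum>w\<in>M. f w)"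
      using xM zM by (intro sum.cong) (auto simp: f'_def)
    finally show ?thesis by (simp add: f'z)
  qed
  have fl_z: "in_flow Z zbs S' p' f' z = (\<Sum>w\<in>U - M. f w)"
    unfolding in_flow_def in_z using xU zM yz pzy
    by (intro sum.cong) (auto simp: f'_def Ueq)
  have fl_o: "in_flow Z zbs S' p' f' v = in_flow Z zbs S p f v" if "v \<noteq> x" "v \<noteq> z" for v
  proof (cases "v = y")
    case False
    have "z \<notin> in_nbrs Z zbs S p v" using False by (auto simp: in_nbrs_def pzy[symmetric])
    then show ?thesis unfolding in_flow_def in_o[OF that False]
      using x_nin[of v] by (intro sum.cong) (auto simp: f'_def)
  next
    case True
    have "in_flow Z zbs S' p' f' y = f' x + (\<Sum>w\<in>in_nbrs Z zbs S p y - {z}. f' w)"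
      unfolding in_flow_def in_y using fin_in x_nin by simp
    also have "(\<Sum>w\<in>in_nbrs Z zbs S p y - {z}. f' w) = (\<Sum>w\<in>in_nbrs Z zbs S p y - {z}. f w)"
      using x_nin[of y] by (intro sum.cong) (auto simp: f'_def)
    also have "f' x + \<dots> = (\<Sum>w\<in>in_nbrs Z zbs S p y. f w)"
      using sum.remove[OF fin_in zy_in, of f] by (simp add: f'x F_def)
    finally show ?thesis using True by (simp add: in_flow_def)
  qed
  have card_o: "card (in_nbrs Z zbs S' p' v) = card (in_nbrs Z zbs S p v)" if "v \<noteq> x" "v \<noteq> z" for v
  proof (cases "v = y")
    case False then show ?thesis using in_o[OF that False] by simp
  next
    case True
    show ?thesis using True in_y fin_in x_nin zy_in
      by (simp add: card_insert_if) (metis Suc_pred card_gt_0_iff empty_iff fin_in)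
  qed
  have Fc: "F = c + (\<Sum>w\<in>M. f w)"
  proof -
    have "F = 1 + (\<Sum>w\<in>U. f w)" using bspec[OF flZ z] by (simp add: F_def in_flow_def U_def algebra_simps)
    also have "(\<Sum>w\<in>U. f w) = (\<Sum>w\<in>U - M. f w) + (\<Sum>w\<in>M. f w)"
      using sum.subset_diff[OF MU finU] by simp
    finally show ?thesis by (simp add: c_def)
  qed
  have cpos: "c > 0"
  proof -
    have "\<forall>w\<in>U - M. f w > 0" using Vp Ueq by auto
    hence "(\<Sum>w\<in>U - M. f w) \<ge> 0" by (meson less_imp_le sum_nonneg)
    thus ?thesis by (simp add: c_def)
  qed
  have fq': "is_fqst Z zbs S' p' f'"
    unfolding is_fqst_def
  proof (intro conjI)
    show "finite S'" using finS by (simp add: S'_def)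
    show "S' \<inter> (Z \<union> {zbs}) = {}" using disj xZ xzbs by (auto simp: S'_def)
    show "\<forall>w\<in>fq_vertices Z zbs S' - {zbs}.
        p' w \<in> fq_vertices Z zbs S' \<and> (\<exists>k. (p' ^^ k) w = zbs) \<and> 0 < f' w"
    proof
      fix w assume w: "w \<in> fq_vertices Z zbs S' - {zbs}"
      show "p' w \<in> fq_vertices Z zbs S' \<and> (\<exists>k. (p' ^^ k) w = zbs) \<and> 0 < f' w"
      proof (cases "w = x")
        case True
        obtain k where k: "(p^^k) z = zbs" using Vp zV zz by blast
        have "k \<noteq> 0" using k zz by (metis funpow_0)
        then obtain j where "k = Suc j" using not0_implies_Suc by blast
        hence "(p^^j) y = zbs" using k by (simp add: funpow_Suc_right y_def del: funpow.simps)
        then obtain k' where "(p'^^k') y = zbs" using reach yV by blast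
        hence "(p'^^Suc k') x = zbs" using p'x by (simp add: funpow_Suc_right del: funpow.simps)
        then show ?thesis using True p'x yV V' f'x Fpos by blast
      next
        case False
        hence wV: "w \<in> V - {zbs}" using w V' by blast
        then obtain k where "(p^^k) w = zbs" using Vp by blast
        then obtain k' where k': "(p'^^k') w = zbs" using reach wV by blast
        have "p' w \<in> insert x V" using p'z p'M p'o wV Vp False by (metis DiffD1 insertCI)
        moreover have "0 < f' w" using f'z f'o cpos wV Vp False by (metis)
        ultimately show ?thesis using k' V' by blast
      qed
    qed
    show "\<forall>s\<in>Z. f' s - in_flow Z zbs S' p' f' s = 1"
    proof
      fix s assume s: "s \<in> Z"
      show "f' s - in_flow Z zbs S' p' f' s = 1"
      proof (cases "s = z")
        case True then show ?thesis using f'z fl_z by (simp add: c_def)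
      next
        case False
        have "s \<noteq> x" using s xZ by blast
        then show ?thesis using flZ s f'o[OF _ False] fl_o[OF _ False] by simp
      qed
    qed
    show "\<forall>s\<in>S'. f' s = in_flow Z zbs S' p' f' s"
    proof
      fix s assume s: "s \<in> S'"
      show "f' s = in_flow Z zbs S' p' f' s"
      proof (cases "s = x")
        case True then show ?thesis using f'x fl_x Fc by simp
      next
        case False
        hence sS: "s \<in> S" using s by (simp add: S'_def)
        have "s \<noteq> z" using sS disj z by blast
        then show ?thesis using flS sS f'o[OF False] fl_o[OF False] by simp
      qed
    qed
    show "in_flow Z zbs S' p' f' zbs = real (card Z)"
      using fl_o[OF xzbs[symmetric] zz[symmetric]] flB by simp
  qed
  have db': "deg_bounded \<phi> Z zbs S' p'"
    unfolding deg_bounded_def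
  proof
    fix s assume s: "s \<in> S'"
    show "\<phi> \<le> fq_degree Z zbs S' p' s"
    proof (cases "s = x")
      case True
      have "card (insert z M) = card M + 1" using finM zM by simp
      then show ?thesis using True in_x card xzbs by (simp add: fq_degree_def)
    next
      case False
      hence sS: "s \<in> S" using s by (simp add: S'_def)
      have "s \<noteq> z" using sS disj z by blast
      then show ?thesis using db sS card_o[OF False] unfolding deg_bounded_def fq_degree_def by auto
    qed
  qed
  have le: "fq_cost Z zbs S p f \<le> fq_cost Z zbs S' p' f'" using mini fq' db' by blast
  define N where "N = V - {zbs}"
  define R where "R = N - insert z M"
  have finN: "finite N" using finV by (simp add: N_def)
  have zMN: "insert z M \<subseteq> N" using MV zV zz by (auto simp: N_def)
  have xN: "x \<notin> N" using xV by (simp add: N_def V_def)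
  define g where "g = (\<lambda>w. f w * (norm (w - p w))^2)"
  define g' where "g' = (\<lambda>w. f' w * (norm (w - p' w))^2)"
  have cost: "fq_cost Z zbs S p f = sum g R + F*(norm(z - y))^2 + (\<Sum>w\<in>M. f w*(norm(w-z))^2)"
  proof -
    have "fq_cost Z zbs S p f = sum g N" by (simp add: fq_cost_def g_def N_def V_def)
    also have "\<dots> = sum g R + sum g (insert z M)"
      using sum.subset_diff[OF zMN finN] by (simp add: R_def)
    also have "sum g (insert z M) = g z + sum g M" using finM zM by simp
    also have "sum g M = (\<Sum>w\<in>M. f w*(norm(w-z))^2)"
      using pM by (intro sum.cong) (auto simp: g_def)
    finally show ?thesis by (simp add: g_def F_def y_def)
  qed
  have cost': "fq_cost Z zbs S' p' f' = F*(norm(x - y))^2 + sum g R + c*(norm(z - x))^2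
       + (\<Sum>w\<in>M. f w*(norm(w-x))^2)"
  proof -
    have "fq_cost Z zbs S' p' f' = sum g' (insert x N)"
      using V' xzbs by (simp add: fq_cost_def g'_def N_def insert_Diff_if)
    also have "\<dots> = g' x + sum g' N" using finN xN by simp
    also have "sum g' N = sum g' R + sum g' (insert z M)"
      using sum.subset_diff[OF zMN finN] by (simp add: R_def)
    also have "sum g' (insert z M) = g' z + sum g' M" using finM zM by simp
    also have "sum g' M = (\<Sum>w\<in>M. f w*(norm(w-x))^2)"
      using p'M xM zM by (intro sum.cong) (auto simp: g'_def f'_def)
    also have "sum g' R = sum g R"
    proof (intro sum.cong refl)
      fix w assume "w \<in> R"
      hence "w \<noteq> x" "w \<noteq> z" "w \<notin> M" using xN by (auto simp: R_def)
      thus "g' w = g w" using p'o f'o by (simp add: g'_def g_def)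
    qed
    finally show ?thesis using p'x p'z f'x f'z by (simp add: g'_def)
  qed
  show ?thesis using le cost cost' by (simp add: F_def y_def c_def U_def)
qed


lemma basics:
  assumes finZ: "finite Z" and zbsZ: "zbs \<notin> Z" and mf: "is_mfqst \<phi> Z zbs S p f" and z: "z \<in> Z"
  shows "finite (fq_vertices Z zbs S)" "f z > 0" "p z \<noteq> z"
    "\<forall>w\<in>in_nbrs Z zbs S p z. f w > 0 \<and> w \<noteq> z"
    "finite (in_nbrs Z zbs S p z)"
    "f z = 1 + (\<Sum>u\<in>in_nbrs Z zbs S p z. f u)"
proof -
  have fq: "is_fqst Z zbs S p f" using mf by (simp add: is_mfqst_def)
  have finS: "finite S"
    and Vp: "\<forall>w\<in>fq_vertices Z zbs S-{zbs}. p w \<in> fq_vertices Z zbs S \<and> (\<exists>k. (p ^^ k) w = zbs) \<and> f w > 0"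
    and flZ: "\<forall>s\<in>Z. f s - in_flow Z zbs S p f s = 1"
    using fq unfolding is_fqst_def by blast+
  show finV: "finite (fq_vertices Z zbs S)" using finZ finS by (simp add: fq_vertices_def)
  have zV: "z \<in> fq_vertices Z zbs S - {zbs}" using z zbsZ by (auto simp: fq_vertices_def)
  show "f z > 0" using Vp zV by blast
  show pz: "p z \<noteq> z"
  proof
    assume "p z = z"
    moreover obtain k where "(p^^k) z = zbs" using Vp zV by blast
    ultimately show False using fix_reach[of p z k] zV by simp
  qed
  show "\<forall>w\<in>in_nbrs Z zbs S p z. f w > 0 \<and> w \<noteq> z"
    using Vp pz by (auto simp: in_nbrs_def)
  show "finite (in_nbrs Z zbs S p z)" using finV by (simp add: in_nbrs_def)
  show "f z = 1 + (\<Sum>u\<in>in_nbrs Z zbs S p z. f u)"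
    using bspec[OF flZ z] by (simp add: in_flow_def algebra_simps)
qed

lemma grp_aux:
  fixes a :: "'a::ab_group_add"
  assumes "X = a + Y" "X + B = 0" "Y + B = 0" shows "a = 0"
proof -
  have "a + (Y + B) = 0" using assms(1,2) by (simp add: add.assoc)
  thus ?thesis using assms(3) by simp
qed

lemma keylemma:
  assumes finZ: "finite Z" and zbsZ: "zbs \<notin> Z" and mf: "is_mfqst \<phi> Z zbs S p f" and z: "z \<in> Z"
    and M: "M \<subseteq> in_nbrs Z zbs S p z" and card: "\<phi> \<le> card M + 2"
  shows "(\<Sum>w\<in>M. f w *\<^sub>R (w - z)) + f z *\<^sub>R (p z - z) = 0"
proof (rule geo)
  note b = basics[OF finZ zbsZ mf z]
  show "finite (fq_vertices Z zbs S)" using b by blast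
  show "f z > 0" using b by blast
  show "finite M" using b M finite_subset by blast
  show "\<forall>w\<in>M. f w \<ge> 0" using b M by (meson less_imp_le subsetD)
  have "\<forall>w\<in>in_nbrs Z zbs S p z - M. f w \<ge> 0" using b by (meson DiffD1 less_imp_le)
  hence "(\<Sum>w\<in>in_nbrs Z zbs S p z - M. f w) \<ge> 0" by (intro sum_nonneg) blast
  thus "1 + (\<Sum>w\<in>in_nbrs Z zbs S p z - M. f w) \<ge> 0" by simp
  show "\<forall>x. x \<notin> fq_vertices Z zbs S \<longrightarrow> 0 \<le> f z*(norm(x - p z))^2
     + (1 + (\<Sum>w\<in>in_nbrs Z zbs S p z - M. f w))*(norm(z-x))^2
     + (\<Sum>w\<in>M. f w*(norm(w-x))^2) - f z*(norm(z - p z))^2 - (\<Sum>w\<in>M. f w*(norm(w-z))^2)"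
    using construct[OF finZ zbsZ mf z M card] by blast
qed

theorem mainTheorem9:
  fixes Z :: "(real^2) set" and zbs :: "real^2" and S :: "(real^2) set"
    and p :: "real^2 \<Rightarrow> real^2" and f :: "real^2 \<Rightarrow> real" and \<phi> :: nat
  assumes "finite Z" and "Z \<noteq> {}" and "zbs \<notin> Z"
    and "\<phi> \<ge> 3"
    and "is_mfqst \<phi> Z zbs S p f"
    and "z \<in> Z"
  shows "fq_degree Z zbs S p z \<le> \<phi> - 1 \<and>
    (fq_degree Z zbs S p z = \<phi> - 1 \<longrightarrow>
      (let U = in_nbrs Z zbs S p z;
           C = (1 / (1 + (\<Sum>u\<in>U. f u))) *\<^sub>R (z + (\<Sum>u\<in>U. f u *\<^sub>R u))
       in z = (1/2) *\<^sub>R (C + p z)))"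
proof -
  note b = basics[OF assms(1,3,5,6)]
  note key = keylemma[OF assms(1,3,5,6)]
  define U where "U = in_nbrs Z zbs S p z"
  have zz: "z \<noteq> zbs" using assms(3,6) by blast
  have deg: "fq_degree Z zbs S p z = card U + 1" using zz by (simp add: fq_degree_def U_def)
  have finU: "finite U" using b by (simp add: U_def)
  have part1: "card U + 1 \<le> \<phi> - 1"
  proof (rule ccontr)
    assume "\<not> ?thesis"
    hence c: "\<phi> \<le> card U + 1" by simp
    hence "card U \<ge> 2" using assms(4) by simp
    then obtain u where u: "u \<in> U" by (metis card.empty ex_in_conv not_numeral_le_zero)
    have k1: "(\<Sum>w\<in>U. f w *\<^sub>R (w - z)) + f z *\<^sub>R (p z - z) = 0"
      using key[of U] c by (simp add: U_def)
    have cU: "card (U - {u}) = card U - 1" using u finU by simp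
    have k2: "(\<Sum>w\<in>U - {u}. f w *\<^sub>R (w - z)) + f z *\<^sub>R (p z - z) = 0"
      using key[of "U - {u}"] c cU \<open>card U \<ge> 2\<close> by (simp add: U_def)
    have "(\<Sum>w\<in>U. f w *\<^sub>R (w - z)) = f u *\<^sub>R (u - z) + (\<Sum>w\<in>U - {u}. f w *\<^sub>R (w - z))"
      using sum.remove[OF finU u] by simp
    hence "f u *\<^sub>R (u - z) = 0" using k1 k2 by (rule grp_aux)
    moreover have "f u > 0" "u \<noteq> z" using b u by (auto simp: U_def)
    ultimately show False by simp
  qed
  have part2: "z = (1/2) *\<^sub>R ((1 / (1 + (\<Sum>u\<in>U. f u))) *\<^sub>R (z + (\<Sum>u\<in>U. f u *\<^sub>R u)) + p z)"
    if "card U + 1 = \<phi> - 1"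
  proof -
    define s where "s = (\<Sum>u\<in>U. f u)"
    define A where "A = (\<Sum>u\<in>U. f u *\<^sub>R u)"
    have F: "f z = 1 + s" using b by (simp add: s_def U_def)
    have spos: "s \<ge> 0" using b by (simp add: s_def U_def sum_nonneg less_imp_le)
    have k: "(\<Sum>w\<in>U. f w *\<^sub>R (w - z)) + f z *\<^sub>R (p z - z) = 0"
      using key[of U] that assms(4) by (simp add: U_def)
    define X where "X = (\<Sum>w\<in>U. f w *\<^sub>R (w - z))"
    have XA: "X = A - s *\<^sub>R z"
      by (simp add: X_def A_def s_def scaleR_diff_right sum_subtractf scaleR_sum_left)
    have "X = - (f z *\<^sub>R (p z - z))" using k unfolding X_def[symmetric]
      by (simp add: eq_neg_iff_add_eq_0)
    hence "A - s *\<^sub>R z = - ((1 + s) *\<^sub>R (p z - z))" using XA F by simp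
    hence "A = s *\<^sub>R z + (1 + s) *\<^sub>R z - (1 + s) *\<^sub>R p z"
      by (simp add: algebra_simps)
    hence "z + A = (1 + s) *\<^sub>R (2 *\<^sub>R z - p z)"
      by (simp add: algebra_simps scaleR_2)
    hence "(1 / (1 + s)) *\<^sub>R (z + A) = 2 *\<^sub>R z - p z" using spos by simp
    hence H: "(1 / (1 + s)) *\<^sub>R (z + A) + p z = 2 *\<^sub>R z" by simp
    show ?thesis unfolding s_def[symmetric] A_def[symmetric] H by simp
  qed
  show ?thesis using part1 part2 deg by (simp add: U_def Let_def)
qed

end
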